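(* Let $r>0$, $\varepsilon_0>0$, let $n\ge 1$ be an integer, and let $\varphi_0$ be an axially symmetric external potential, harmonic inside the ball of radius $r$ centered at the origin, whose values on the axis are a polynomial of degree $n$: \[ -\varphi_0(s)=\sum_{i=1}^{n+1} b_i s^{i-1}. \] Let $\sigma$ be the polynomial of degree at most $n$ on $[-r,r]$ satisfying \[ \int_{-r}^{r}\frac{r\,\sigma(z)}{\sqrt{s^2+r^2-2sz}}\,dz=-2\varepsilon_0\,\varphi_0(s)\qquad(-r<s<r). \] Then the force acting on the ball, $\mathcal F=\frac{\pi}{\varepsilon_0}\int_{-r}^{r}z\,\sigma(z)^2\,dz$, is \[ \mathcal F=4\pi\varepsilon_0\sum_{i=1}^{n} i\,r^{2i-1}\,b_i\,b_{i+1}. \]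
   Context: Physical setting: a grounded conducting ball of radius $r$ centered at the origin on the axis of an axially symmetric external field with potential $\varphi_0$; $\varepsilon_0$ is the electric constant; $\sigma(z)$ is the induced surface charge density as a function of the axial coordinate $z$. The force expression comes from the electric pressure $p=-\sigma^2/(2\varepsilon_0)$ integrated over the sphere. *)

theory Defs
  imports "HOL-Analysis.Analysis" "HOL-Computational_Algebra.Polynomial"
begin

text \<open>Force on the grounded ball, from the pressure -sig^2/(2 eps0) integrated over the sphere.\<close>
definition ball_force :: "real \<Rightarrow> real \<Rightarrow> (real \<Rightarrow> real) \<Rightarrow> real" where
  "ball_force r eps0 sig = pi / eps0 * integral {-r..r} (\<lambda>z. z * (sig z)^2)"

end

theory Submission
  imports Defs
begin

fun Leg :: "nat \<Rightarrow> real poly" where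
  "Leg 0 = 1"
| "Leg (Suc 0) = [:0,1:]"
| "Leg (Suc (Suc n)) = smult (1 / (real n + 2))
      (smult (2 * real n + 3) (pCons 0 (Leg (Suc n))) - smult (real n + 1) (Leg n))"

abbreviation "L n x \<equiv> poly (Leg n) x"
abbreviation "D n x \<equiv> poly (pderiv (Leg n)) x"

lemma L_rec: "(real n + 2) * L (Suc (Suc n)) x = (2 * real n + 3) * x * L (Suc n) x - (real n + 1) * L n x"
  by (simp add: field_simps)

lemma D_rec: "(real n + 2) * D (Suc (Suc n)) x
   = (2 * real n + 3) * (L (Suc n) x + x * D (Suc n) x) - (real n + 1) * D n x"
  by (simp add: pderiv_pCons pderiv_smult pderiv_diff field_simps)

declare Leg.simps(3)[simp del]

lemma L_rec': "real (k+1) * L (k+1) x = (2 * real k + 1) * x * L k x - real k * L (k-1) x"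
proof (cases k)
  case 0 then show ?thesis by simp
next
  case (Suc m) then show ?thesis using L_rec[of m x] by (simp add: algebra_simps)
qed

lemma L_one: "L n 1 = 1 \<and> L n (-1) = (-1)^n"
proof (induction n rule: Leg.induct)
  case (3 n)
  have a: "(real n + 2) * L (Suc (Suc n)) 1 = (real n + 2) * 1"
    using L_rec[of n 1] 3 by (simp add: algebra_simps)
  have b: "(real n + 2) * L (Suc (Suc n)) (-1) = (real n + 2) * (-1)^(Suc (Suc n))"
    using L_rec[of n "-1"] 3 by (simp add: algebra_simps)
  have nz: "real n + 2 \<noteq> 0" by simp
  show ?case using a b nz by (metis mult_left_cancel)
qed auto

lemma D_ids: "D (Suc n) x = x * D n x + real (Suc n) * L n x
   \<and> x * D (Suc n) x - D n x = real (Suc n) * L (Suc n) x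
   \<and> (x^2 - 1) * D (Suc n) x = real (Suc n) * (x * L (Suc n) x - L n x)"
proof (induction n)
  case 0 then show ?case by (simp add: power2_eq_square pderiv_pCons)
next
  case (Suc n)
  have i: "D (Suc n) x = x * D n x + real (Suc n) * L n x" using Suc by blast
  have iii: "x * D (Suc n) x - D n x = real (Suc n) * L (Suc n) x" using Suc by blast
  have iv: "(x^2 - 1) * D (Suc n) x = real (Suc n) * (x * L (Suc n) x - L n x)" using Suc by blast
  have r: "(real n + 2) * L (Suc (Suc n)) x = (2 * real n + 3) * x * L (Suc n) x - (real n + 1) * L n x"
    by (rule L_rec)
  have dr: "(real n + 2) * D (Suc (Suc n)) x
   = (2 * real n + 3) * (L (Suc n) x + x * D (Suc n) x) - (real n + 1) * D n x" by (rule D_rec)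
  have i2: "D (Suc (Suc n)) x = x * D (Suc n) x + real (Suc (Suc n)) * L (Suc n) x"
  proof -
    have g: "\<And>b c l::real. b = c + (real n+1)*l \<Longrightarrow> (2 * real n + 3) * (l + b) - (real n + 1) * c = (real n + 2) * (b + (real n + 2) * l)"
      by (simp add: algebra_simps)
    have e: "x * D (Suc n) x = D n x + (real n + 1) * L (Suc n) x" using iii by (simp add: algebra_simps)
    have "(real n + 2) * D (Suc (Suc n)) x = (real n + 2) * (x * D (Suc n) x + (real n + 2) * L (Suc n) x)"
      using dr g[OF e] by simp
    then show ?thesis by simp
  qed
  have iii2: "x * D (Suc (Suc n)) x - D (Suc n) x = real (Suc (Suc n)) * L (Suc (Suc n)) x"
  proof -
    have "x * D (Suc (Suc n)) x - D (Suc n) x = (x^2 - 1) * D (Suc n) x + real (Suc (Suc n)) * x * L (Suc n) x"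
      using i2 by (simp add: algebra_simps power2_eq_square)
    also have "\<dots> = real (Suc (Suc n)) * L (Suc (Suc n)) x"
      using iv r by (simp add: algebra_simps)
    finally show ?thesis .
  qed
  have iv2: "(x^2 - 1) * D (Suc (Suc n)) x = real (Suc (Suc n)) * (x * L (Suc (Suc n)) x - L (Suc n) x)"
  proof -
    have "(x^2 - 1) * D (Suc (Suc n)) x = x * ((x^2 - 1) * D (Suc n) x) + real (Suc (Suc n)) * (x^2 - 1) * L (Suc n) x"
      using i2 by (simp add: algebra_simps)
    also have "\<dots> = x * (real (Suc n) * (x * L (Suc n) x - L n x)) + real (Suc (Suc n)) * (x^2 - 1) * L (Suc n) x"
      using iv by simp
    also have "\<dots> = x * ((2 * real n + 3) * x * L (Suc n) x - (real n + 1) * L n x) - real (Suc (Suc n)) * L (Suc n) x"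
      by (simp add: algebra_simps power2_eq_square)
    also have "\<dots> = x * ((real n + 2) * L (Suc (Suc n)) x) - real (Suc (Suc n)) * L (Suc n) x"
      by (simp only: r)
    also have "\<dots> = real (Suc (Suc n)) * (x * L (Suc (Suc n)) x - L (Suc n) x)"
      by (simp add: algebra_simps)
    finally show ?thesis .
  qed
  show ?case using i2 iii2 iv2 by blast
qed

lemma D_diff: "D (Suc (Suc n)) x - D n x = (2 * real n + 3) * L (Suc n) x"
proof -
  have a: "D (Suc (Suc n)) x = x * D (Suc n) x + real (Suc (Suc n)) * L (Suc n) x" using D_ids[of "Suc n" x] by blast
  have b: "x * D (Suc n) x - D n x = real (Suc n) * L (Suc n) x" using D_ids[of n x] by blast
  show ?thesis using a b by (simp add: algebra_simps)
qed

lemma deg_Leg: "degree (Leg n) = n \<and> coeff (Leg n) n > 0"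
proof (induction n rule: Leg.induct)
  case (3 n)
  let ?p = "smult (2 * real n + 3) (pCons 0 (Leg (Suc n))) - smult (real n + 1) (Leg n)"
  have d1: "degree ?p \<le> Suc (Suc n)"
    using 3 by (intro degree_diff_le) (auto intro: order.trans[OF degree_smult_le])
  have c: "coeff ?p (Suc (Suc n)) = (2 * real n + 3) * coeff (Leg (Suc n)) (Suc n)"
    using 3 by (simp add: coeff_eq_0)
  have cpos: "coeff ?p (Suc (Suc n)) > 0" using c 3 by simp
  have "degree ?p = Suc (Suc n)"
    using d1 cpos le_degree[of ?p "Suc (Suc n)"] by fastforce
  then show ?case using cpos by (simp add: field_simps Leg.simps(3))
qed auto

lemma cont_poly[continuous_intros]:
  "continuous_on S f \<Longrightarrow> continuous_on S (\<lambda>x. poly p (f x :: real))"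
proof -
  assume f: "continuous_on S f"
  have "continuous_on UNIV (poly p)"
    by (meson DERIV_isCont continuous_at_imp_continuous_on poly_DERIV)
  then show ?thesis using continuous_on_compose2[OF _ f] by blast
qed

lemma intg: fixes f :: "real \<Rightarrow> real" shows "continuous_on {a..b} f \<Longrightarrow> f integrable_on {a..b}"
  by (rule integrable_continuous_interval)

lemma ftc_poly: fixes a b :: real shows "a \<le> b \<Longrightarrow> integral {a..b} (\<lambda>x. poly (pderiv p) x) = poly p b - poly p a"
proof -
  assume ab: "a \<le> b"
  have "((\<lambda>x. poly (pderiv p) x) has_integral poly p b - poly p a) {a..b}"
    apply (rule fundamental_theorem_of_calculus[OF ab])
    unfolding has_real_derivative_iff_has_vector_derivative[symmetric]
    using poly_DERIV DERIV_subset by blast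
  then show ?thesis by blast
qed

lemma ibp:
  "integral {-1..1} (\<lambda>x. poly (pderiv R) x * poly q x)
   = (poly R 1 * poly q 1 - poly R (-1) * poly q (-1)) - integral {-1..1} (\<lambda>x::real. poly R x * poly (pderiv q) x)"
proof -
  have "integral {-1..1} (\<lambda>x. poly (pderiv (R*q)) x) = poly (R*q) 1 - poly (R*q) (-1)"
    by (rule ftc_poly) simp
  moreover have "integral {-1..1} (\<lambda>x. poly (pderiv (R*q)) x)
    = integral {-1..1} (\<lambda>x. poly (pderiv R) x * poly q x) + integral {-1..1} (\<lambda>x. poly R x * poly (pderiv q) x)"
  proof -
    have e: "(\<lambda>x. poly (pderiv (R*q)) x) = (\<lambda>x. poly (pderiv R) x * poly q x + poly R x * poly (pderiv q) x)"
      by (rule ext) (simp add: pderiv_mult mult.commute)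
    show ?thesis unfolding e
      by (rule integral_add; rule intg; intro continuous_intros)
  qed
  ultimately show ?thesis by simp
qed

lemma orth: "degree q < l \<Longrightarrow> integral {-1..1} (\<lambda>x. L l x * poly q x) = 0"
proof (induction "degree q" arbitrary: q l rule: less_induct)
  case less
  then obtain k where l: "l = Suc k" by (cases l) auto
  let ?R = "Leg (Suc (Suc k)) - Leg k"
  have R1: "poly ?R 1 = 0" "poly ?R (-1) = 0" using L_one[of "Suc (Suc k)"] L_one[of k] by auto
  have eqL: "L l x = poly (pderiv ?R) x / (2 * real k + 3)" for x
    using D_diff[of k x] l by (simp add: pderiv_diff field_simps)
  have "integral {-1..1} (\<lambda>x. L l x * poly q x)
      = integral {-1..1} (\<lambda>x. poly (pderiv ?R) x * poly q x) / (2 * real k + 3)"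
  proof -
    have "(\<lambda>x. L l x * poly q x) = (\<lambda>x. (1 / (2 * real k + 3)) * (poly (pderiv ?R) x * poly q x))"
      by (rule ext) (simp only: eqL, simp)
    then show ?thesis by (simp only: integral_mult_right) simp
  qed
  also have "integral {-1..1} (\<lambda>x. poly (pderiv ?R) x * poly q x)
      = - integral {-1..1} (\<lambda>x::real. poly ?R x * poly (pderiv q) x)"
    using ibp[of ?R q] R1 by simp
  also have "integral {-1..1} (\<lambda>x::real. poly ?R x * poly (pderiv q) x) = 0"
  proof (cases "degree q = 0")
    case True
    then have "pderiv q = 0" by (simp add: pderiv_eq_0_iff)
    then show ?thesis by simp
  next
    case False
    have dq: "degree (pderiv q) < degree q" using False by (simp add: degree_pderiv)
    have a: "integral {-1..1} (\<lambda>x. L (Suc (Suc k)) x * poly (pderiv q) x) = 0"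
      using less.hyps[OF dq] less.prems l dq by simp
    have b: "integral {-1..1} (\<lambda>x. L k x * poly (pderiv q) x) = 0"
      using less.hyps[OF dq] less.prems l dq False by (simp add: degree_pderiv)
    have "integral {-1..1} (\<lambda>x::real. poly ?R x * poly (pderiv q) x)
      = integral {-1..1} (\<lambda>x. L (Suc (Suc k)) x * poly (pderiv q) x) - integral {-1..1} (\<lambda>x. L k x * poly (pderiv q) x)"
    proof -
      have e: "(\<lambda>x::real. poly ?R x * poly (pderiv q) x) = (\<lambda>x. L (Suc (Suc k)) x * poly (pderiv q) x - L k x * poly (pderiv q) x)"
        by (rule ext) (simp add: left_diff_distrib)
      show ?thesis unfolding e
        by (rule integral_diff; rule intg; intro continuous_intros)
    qed
    then show ?thesis using a b by simp
  qed
  finally show ?case by simp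
qed

definition IP :: "nat \<Rightarrow> nat \<Rightarrow> real" where
  "IP a b = integral {-1..1} (\<lambda>x. L a x * L b x)"
definition XI :: "nat \<Rightarrow> nat \<Rightarrow> real" where
  "XI a b = integral {-1..1} (\<lambda>x. x * L a x * L b x)"

lemma IP_orth: "a \<noteq> b \<Longrightarrow> IP a b = 0"
proof -
  assume ab: "a \<noteq> b"
  have *: "integral {-1..1} (\<lambda>x. L a x * L b x) = 0" if "b < a" for a b
    using orth[of "Leg b" a] deg_Leg[of b] that by simp
  show ?thesis
  proof (cases "b < a")
    case True then show ?thesis using * unfolding IP_def by blast
  next
    case False
    then have "a < b" using ab by simp
    then show ?thesis using *[of a b] unfolding IP_def by (simp add: mult.commute)
  qed
qed

lemma lin2: fixes f g :: "real \<Rightarrow> real"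
  assumes "continuous_on {-1..1} f" "continuous_on {-1..1} g"
  shows "integral {-1..1} (\<lambda>x. c1 * f x + c2 * g x) = c1 * integral {-1..1} f + c2 * integral {-1..1} g"
proof -
  have "integral {-1..1} (\<lambda>x. c1 * f x + c2 * g x) = integral {-1..1} (\<lambda>x. c1 * f x) + integral {-1..1} (\<lambda>x. c2 * g x)"
    by (rule integral_add; rule intg; intro continuous_intros assms)
  then show ?thesis by simp
qed

lemma XI_IP: "XI a b = (real (a+1) / (2 * real a + 1)) * IP (a+1) b + (real a / (2 * real a + 1)) * IP (a-1) b"
proof -
  have nz: "2 * real a + 1 \<noteq> 0" by (metis add_nonneg_pos of_nat_0_le_iff zero_less_one mult_nonneg_nonneg zero_le_numeral less_irrefl)
  have xl0: "(2 * real a + 1) * (x * L a x) = real (a+1) * L (a+1) x + real a * L (a-1) x" for x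
    using L_rec'[of a x] by (simp add: algebra_simps)
  have xl: "x * L a x = (real (a+1) / (2 * real a + 1)) * L (a+1) x + (real a / (2 * real a + 1)) * L (a-1) x" for x
  proof -
    have "x * L a x = (real (a+1) * L (a+1) x + real a * L (a-1) x) / (2 * real a + 1)"
      using xl0[of x] nz by (metis nonzero_mult_div_cancel_left)
    then show ?thesis by (simp only: add_divide_distrib times_divide_eq_left)
  qed
  have e: "(\<lambda>x. x * L a x * L b x) = (\<lambda>x. (real (a+1) / (2 * real a + 1)) * (L (a+1) x * L b x) + (real a / (2 * real a + 1)) * (L (a-1) x * L b x))"
    by (rule ext) (simp only: xl, simp add: algebra_simps)
  show ?thesis unfolding XI_def IP_def e
    by (rule lin2; intro continuous_intros)
qed

lemma IP_norm: "IP k k = 2 / (2 * real k + 1)"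
proof (induction k)
  case 0
  then show ?case by (simp add: IP_def)
next
  case (Suc k)
  have nz: "real (k+1) \<noteq> 0" by simp
  have r: "L (Suc k) x = ((2 * real k + 1) / real (k+1)) * (x * L k x) - (real k / real (k+1)) * L (k-1) x" for x
  proof -
    have "L (Suc k) x = ((2 * real k + 1) * x * L k x - real k * L (k-1) x) / real (k+1)"
      using L_rec'[of k x] nz by (metis Suc_eq_plus1 nonzero_mult_div_cancel_left)
    then show ?thesis by (simp only: diff_divide_distrib times_divide_eq_left mult.assoc)
  qed
  have e: "(\<lambda>x. L (Suc k) x * L (Suc k) x) = (\<lambda>x. ((2 * real k + 1) / real (k+1)) * (x * L (Suc k) x * L k x) - (real k / real (k+1)) * (L (k-1) x * L (Suc k) x))"
  proof (rule ext)
    fix x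
    have "L (Suc k) x * L (Suc k) x = (((2 * real k + 1) / real (k+1)) * (x * L k x) - (real k / real (k+1)) * L (k-1) x) * L (Suc k) x"
      by (simp only: r[symmetric])
    then show "L (Suc k) x * L (Suc k) x = ((2 * real k + 1) / real (k+1)) * (x * L (Suc k) x * L k x) - (real k / real (k+1)) * (L (k-1) x * L (Suc k) x)"
      by (simp add: algebra_simps)
  qed
  have "IP (Suc k) (Suc k) = ((2 * real k + 1) / real (k+1)) * XI (Suc k) k - (real k / real (k+1)) * IP (k-1) (Suc k)"
    using lin2[of "\<lambda>x. x * L (Suc k) x * L k x" "\<lambda>x. L (k-1) x * L (Suc k) x" "(2 * real k + 1) / real (k+1)" "- (real k / real (k+1))"]
    unfolding IP_def XI_def e by (simp add: continuous_intros)
  also have "IP (k-1) (Suc k) = 0" by (rule IP_orth) simp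
  also have "XI (Suc k) k = (real (Suc k) / (2 * real (Suc k) + 1)) * IP k k"
    using XI_IP[of "Suc k" k] IP_orth[of "Suc k + 1" k] by simp
  finally have "IP (Suc k) (Suc k) = ((2 * real k + 1) / real (k+1)) * ((real (Suc k) / (2 * real (Suc k) + 1)) * (2 / (2 * real k + 1)))"
    using Suc by simp
  moreover have "((2*y+1)/(y+1)) * ((y+1)/(2*(y+1)+1) * (2/(2*y+1))) = 2/(2*(y+1)+1)" if "y \<ge> 0" for y :: real
  proof -
    have "2*y+1 > 0" "y+1 > 0" "2*(y+1)+1 > 0" using that by auto
    then show ?thesis by (simp add: divide_simps)
  qed
  moreover have "real (Suc k) = real k + 1" "real (k+1) = real k + 1" by simp_all
  ultimately show ?case by (simp only:)
qed

lemma XI_val: "XI l m = (if m = l + 1 then 2 * real (l+1) / ((2 * real l + 1) * (2 * real l + 3)) else 0)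
   + (if l = m + 1 then 2 * real (m+1) / ((2 * real m + 1) * (2 * real m + 3)) else 0)"
proof -
  have a: "IP (l+1) m = (if m = l + 1 then 2 / (2 * real l + 3) else 0)"
    using IP_norm[of "l+1"] IP_orth[of "l+1" m] by (auto simp: field_simps)
  have b: "real l * IP (l-1) m = (if l = m + 1 then real l * (2 / (2 * real m + 1)) else 0)"
  proof (cases "l = m + 1")
    case True then show ?thesis using IP_norm[of m] by simp
  next
    case False
    show ?thesis
    proof (cases "l = 0")
      case True then show ?thesis by simp
    next
      case l0: False
      then have "l - 1 \<noteq> m" using False by auto
      then show ?thesis using IP_orth[of "l-1" m] False by simp
    qed
  qed
  have xi: "XI l m = (real (l+1) * IP (l+1) m + real l * IP (l-1) m) / (2 * real l + 1)"
    by (simp only: XI_IP add_divide_distrib times_divide_eq_left)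
  have p: "real l \<ge> 0" "real m \<ge> 0" by simp_all
  show ?thesis
  proof (cases "m = l + 1")
    case True
    then have nl: "l \<noteq> m + 1" by simp
    have "XI l m = real (l+1) * (2 / (2 * real l + 3)) / (2 * real l + 1)"
      unfolding xi a b using True nl by simp
    also have "\<dots> = 2 * real (l+1) / ((2 * real l + 1) * (2 * real l + 3))"
      using p by (simp add: divide_simps)
    finally show ?thesis using True nl by simp
  next
    case False
    show ?thesis
    proof (cases "l = m + 1")
      case True
      have "XI l m = real l * (2 / (2 * real m + 1)) / (2 * real l + 1)"
        unfolding xi a b using True False by simp
      also have "\<dots> = 2 * real (m+1) / ((2 * real m + 1) * (2 * real m + 3))"
        using p True by (simp add: divide_simps algebra_simps)
      finally show ?thesis using True False by simp
    next
      case F2: False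
      show ?thesis unfolding xi a b using False F2 by simp
    qed
  qed
qed


definition w :: "real \<Rightarrow> real \<Rightarrow> real" where
  "w t x = sqrt (1 + t^2 - 2 * t * x)"

lemma rad_pos: fixes t x :: real shows "0 < t \<Longrightarrow> t < 1 \<Longrightarrow> x \<le> 1 \<Longrightarrow> 1 + t^2 - 2 * t * x > 0"
proof -
  assume t: "0 < t" "t < 1" and x: "x \<le> 1"
  have "t * x \<le> t" using mult_left_le[of x t] t x by simp
  moreover have "(1 - t)^2 > 0" using t by simp
  ultimately show ?thesis by (simp add: power2_eq_square algebra_simps)
qed

lemma w_pos: "0 < t \<Longrightarrow> t < 1 \<Longrightarrow> x \<le> 1 \<Longrightarrow> w t x > 0"
  unfolding w_def using rad_pos by simp

lemma cont_w: "0 < t \<Longrightarrow> t < 1 \<Longrightarrow> continuous_on {-1..1} f \<Longrightarrow> continuous_on {-1..1} (\<lambda>x. f x / w t x)"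
proof -
  assume t: "0 < t" "t < 1" and f: "continuous_on {-1..1} f"
  have "\<forall>x\<in>{-1..1}. w t x \<noteq> 0" using w_pos[OF t] by force
  moreover have "continuous_on {-1..1} (w t)" unfolding w_def by (intro continuous_intros)
  ultimately show ?thesis using f by (intro continuous_intros) auto
qed

lemma ftc_w:
  assumes t: "0 < t" "t < 1"
  shows "integral {-1..1} (\<lambda>x. ((1 + t^2) * poly (pderiv Q) x - t * (2 * x * poly (pderiv Q) x + poly Q x)) / w t x)
       = poly Q 1 * (1 - t) - poly Q (-1) * (1 + t)"
proof -
  let ?G = "\<lambda>x. poly Q x * w t x"
  have d: "(?G has_real_derivative ((1 + t^2) * poly (pderiv Q) x - t * (2 * x * poly (pderiv Q) x + poly Q x)) / w t x) (at x)"
    if x: "x \<in> {-1..1}" for x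
  proof -
    have rp: "1 + t^2 - 2 * t * x > 0" using rad_pos[OF t] x by simp
    have wp: "w t x > 0" using w_pos[OF t] x by simp
    have ww: "w t x * w t x = 1 + t^2 - 2 * t * x" unfolding w_def using rp by simp
    have dw: "((\<lambda>x. w t x) has_real_derivative (- 2 * t) * (inverse (w t x) / 2)) (at x)"
      unfolding w_def using rp
      by (auto intro!: derivative_eq_intros simp: divide_simps)
    have "(?G has_real_derivative poly (pderiv Q) x * w t x + poly Q x * ((- 2 * t) * (inverse (w t x) / 2))) (at x)"
      by (rule DERIV_cong[OF DERIV_mult[OF poly_DERIV dw]]) (simp add: algebra_simps)
    moreover have "poly (pderiv Q) x * w t x + poly Q x * ((- 2 * t) * (inverse (w t x) / 2))
        = ((1 + t^2) * poly (pderiv Q) x - t * (2 * x * poly (pderiv Q) x + poly Q x)) / w t x"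
    proof -
      have e: "1 + t^2 = w t x * w t x + 2 * t * x" using ww by simp
      show ?thesis unfolding e using wp by (simp add: divide_simps algebra_simps)
    qed
    ultimately show ?thesis by simp
  qed
  have "((\<lambda>x. ((1 + t^2) * poly (pderiv Q) x - t * (2 * x * poly (pderiv Q) x + poly Q x)) / w t x)
        has_integral ?G 1 - ?G (-1)) {-1..1}"
    apply (rule fundamental_theorem_of_calculus)
     apply simp
    unfolding has_real_derivative_iff_has_vector_derivative[symmetric]
    using d DERIV_subset by blast
  moreover have "w t 1 = 1 - t"
  proof -
    have "1 + t^2 - 2 * t * 1 = (1 - t)^2" by (simp add: power2_eq_square algebra_simps)
    then show ?thesis unfolding w_def using t by simp
  qed
  moreover have "w t (-1) = 1 + t"
  proof -
    have "1 + t^2 - 2 * t * (-1) = (1 + t)^2" by (simp add: power2_eq_square algebra_simps)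
    then show ?thesis unfolding w_def using t by simp
  qed
  ultimately show ?thesis by (simp add: integral_unique)
qed

definition Phi :: "real \<Rightarrow> real poly \<Rightarrow> real" where
  "Phi t p = integral {-1..1} (\<lambda>x. poly p x / w t x)"

lemma Phi_intg: "0 < t \<Longrightarrow> t < 1 \<Longrightarrow> (\<lambda>x. poly p x / w t x) integrable_on {-1..1}"
  by (intro intg cont_w) (auto intro!: continuous_intros)

lemma lin3:
  assumes t: "0 < t" "t < 1"
  shows "integral {-1..1} (\<lambda>x. (a * poly p x + b * poly q x + c * poly r x) / w t x)
     = a * Phi t p + b * Phi t q + c * Phi t r"
proof -
  have e: "(\<lambda>x. (a * poly p x + b * poly q x + c * poly r x) / w t x)
     = (\<lambda>x. (a * (poly p x / w t x) + b * (poly q x / w t x)) + c * (poly r x / w t x))"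
    by (rule ext) (simp add: add_divide_distrib)
  have c: "continuous_on {-1..1} (\<lambda>x. poly p x / w t x)" for p
    by (rule cont_w[OF t]) (intro continuous_intros)
  have i: "(\<lambda>x. k * (poly p x / w t x)) integrable_on {-1..1}" for k p
    by (rule intg, rule continuous_on_mult[OF continuous_on_const c])
  show ?thesis unfolding e Phi_def
    by (subst integral_add, (intro integrable_add i)+, subst integral_add, (rule i)+) (simp only: integral_mult_right)
qed

lemma Phi_0: assumes 1: "0 < t" "t < 1" shows "Phi t 1 = 2"
proof -
  have "integral {-1..1} (\<lambda>x. ((1 + t^2) * poly (pderiv 1) x - t * (2 * x * poly (pderiv 1) x + poly 1 x)) / w t x)
       = poly 1 1 * (1 - t) - poly 1 (-1) * (1 + t)"
    by (rule ftc_w) (use 1 in auto)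
  moreover have "(\<lambda>x. ((1 + t^2) * poly (pderiv 1) x - t * (2 * x * poly (pderiv 1) x + poly (1::real poly) x)) / w t x)
     = (\<lambda>x. ((-t) * poly 1 x + 0 * poly 1 x + 0 * poly 1 x) / w t x)"
    by (rule ext) simp
  ultimately have "- t * Phi t 1 = - 2 * t" using lin3[OF 1, of "-t" 1 0 1 0 1] by simp
  then show ?thesis using 1 by simp
qed

lemma Phi_Leg: "0 < t \<Longrightarrow> t < 1 \<Longrightarrow> Phi t (Leg m) = 2 * t^m / (2 * real m + 1)"
proof (induction m rule: Leg.induct)
  case 1 then show ?case using Phi_0 by simp
next
  case 2
  have "integral {-1..1} (\<lambda>x. ((1 + t^2) * poly (pderiv [:0,1:]) x - t * (2 * x * poly (pderiv [:0,1:]) x + poly [:0,1:] x)) / w t x)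
       = poly [:0,1:] 1 * (1 - t) - poly [:0,1:] (-1) * (1 + t)"
    by (rule ftc_w) (use 2 in auto)
  moreover have "(\<lambda>x. ((1 + t^2) * poly (pderiv [:0,1:]) x - t * (2 * x * poly (pderiv [:0,1:]) x + poly [:0,1::real:] x)) / w t x)
     = (\<lambda>x. ((1 + t^2) * poly 1 x + (- 3 * t) * poly [:0,1:] x + 0 * poly 1 x) / w t x)"
    by (rule ext) (simp add: pderiv_pCons algebra_simps)
  ultimately have "(1 + t^2) * Phi t 1 + (- 3 * t) * Phi t [:0,1:] = 2"
    using lin3[OF 2, of "1 + t^2" 1 "-3*t" "[:0,1:]" 0 1] by simp
  moreover have "Phi t 1 = 2" using 2 by (rule Phi_0)
  ultimately have B: "(1 + t^2) * 2 + (- 3 * t) * Phi t [:0,1:] = 2" by simp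
  have "3 * t * Phi t [:0,1:] = 2 * t^2"
  proof -
    have "(-3*t) * Phi t [:0,1:] = - (3 * t * Phi t [:0,1:])" by simp
    then have "3 * t * Phi t [:0,1:] = (1+t^2)*2 - 2" using B by linarith
    then show ?thesis by (simp add: algebra_simps)
  qed
  then have "t * (3 * Phi t [:0,1:]) = t * (2 * t)" by (simp add: algebra_simps power2_eq_square)
  then have "3 * Phi t [:0,1:] = 2 * t" using 2 by simp
  then show ?case by simp
next
  case (3 n)
  have t: "0 < t" "t < 1" using 3 by auto
  let ?Q = "Leg (Suc (Suc n)) - Leg n"
  have "integral {-1..1} (\<lambda>x. ((1 + t^2) * poly (pderiv ?Q) x - t * (2 * x * poly (pderiv ?Q) x + poly ?Q x)) / w t x)
       = poly ?Q 1 * (1 - t) - poly ?Q (-1) * (1 + t)"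
    by (rule ftc_w[OF t])
  also have "\<dots> = 0" using L_one[of "Suc (Suc n)"] L_one[of n] by simp
  finally have z: "integral {-1..1} (\<lambda>x. ((1 + t^2) * poly (pderiv ?Q) x - t * (2 * x * poly (pderiv ?Q) x + poly ?Q x)) / w t x) = 0" .
  have pt: "((1 + t^2) * poly (pderiv ?Q) x - t * (2 * x * poly (pderiv ?Q) x + poly ?Q x))
     = ((1 + t^2) * (2 * real n + 3)) * L (Suc n) x + (- t * (2 * real n + 5)) * L (Suc (Suc n)) x + (- t * (2 * real n + 1)) * L n x" for x
  proof -
    have d: "poly (pderiv ?Q) x = (2 * real n + 3) * L (Suc n) x" using D_diff[of n x] by (simp add: pderiv_diff)
    have r: "(2 * real n + 3) * x * L (Suc n) x = (real n + 2) * L (Suc (Suc n)) x + (real n + 1) * L n x"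
      using L_rec[of n x] by simp
    have "2 * x * poly (pderiv ?Q) x + poly ?Q x = 2 * ((2 * real n + 3) * x * L (Suc n) x) + L (Suc (Suc n)) x - L n x"
      unfolding d by (simp add: algebra_simps)
    also have "\<dots> = (2 * real n + 5) * L (Suc (Suc n)) x + (2 * real n + 1) * L n x"
      unfolding r by (simp add: algebra_simps)
    finally show ?thesis unfolding d by (simp add: algebra_simps)
  qed
  have E: "((1 + t^2) * (2 * real n + 3)) * Phi t (Leg (Suc n)) + (- t * (2 * real n + 5)) * Phi t (Leg (Suc (Suc n)))
        + (- t * (2 * real n + 1)) * Phi t (Leg n) = 0"
    using z unfolding pt lin3[OF t] .
  have A: "(2 * real n + 3) * Phi t (Leg (Suc n)) = 2 * t^(Suc n)"
  proof -
    have "Phi t (Leg (Suc n)) = 2 * t^(Suc n) / (2 * real (Suc n) + 1)" using 3 by simp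
    moreover have "2 * real (Suc n) + 1 = 2 * real n + 3" by simp
    ultimately have h: "Phi t (Leg (Suc n)) = 2 * t^(Suc n) / (2 * real n + 3)" by simp
    have pos: "2 * real n + 3 \<noteq> 0" by simp
    show ?thesis unfolding h times_divide_eq_right by (rule nonzero_mult_div_cancel_left[OF pos])
  qed
  have C: "(2 * real n + 1) * Phi t (Leg n) = 2 * t^n"
  proof -
    have h: "Phi t (Leg n) = 2 * t^n / (2 * real n + 1)" using 3 by simp
    have pos: "2 * real n + 1 \<noteq> 0" by simp
    show ?thesis unfolding h times_divide_eq_right by (rule nonzero_mult_div_cancel_left[OF pos])
  qed
  have e1: "((1 + t^2) * (2 * real n + 3)) * Phi t (Leg (Suc n)) = (1 + t^2) * (2 * t^(Suc n))"
    by (simp only: mult.assoc A)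
  have e2: "(- t * (2 * real n + 1)) * Phi t (Leg n) = - t * (2 * t^n)"
    by (simp only: mult.assoc C)
  define Y where "Y = (- t * (2 * real n + 5)) * Phi t (Leg (Suc (Suc n)))"
  have "Y = - ((1 + t^2) * (2 * t^(Suc n))) - (- t * (2 * t^n))"
    using E e1 e2 unfolding Y_def by linarith
  then have "t * ((2 * real n + 5) * Phi t (Leg (Suc (Suc n)))) = t * (2 * t^(Suc (Suc n)))"
    unfolding Y_def by (simp add: algebra_simps power2_eq_square)
  then have hX: "(2 * real n + 5) * Phi t (Leg (Suc (Suc n))) = 2 * t^(Suc (Suc n))"
    using t by simp
  have eqc: "2 * real (Suc (Suc n)) + 1 = 2 * real n + 5" by simp
  have pos: "2 * real n + 5 \<noteq> 0" by simp
  have "Phi t (Leg (Suc (Suc n))) = 2 * t^(Suc (Suc n)) / (2 * real n + 5)"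
    unfolding hX[symmetric] by (rule nonzero_mult_div_cancel_left[OF pos, symmetric])
  then show ?case unfolding eqc .
qed


lemma deg_drop: "degree q \<le> Suc n \<Longrightarrow> coeff q (Suc n) = 0 \<Longrightarrow> degree q \<le> n"
  by (metis le_SucE leading_coeff_0_iff degree_0 le0)

lemma basis: "degree p \<le> n \<Longrightarrow> \<exists>c. p = (\<Sum>l\<le>n. smult (c l) (Leg l))"
proof (induction n arbitrary: p)
  case 0
  then have h: "p = [:coeff p 0:]" by (metis degree_0_id le_zero_eq)
  show ?case by (rule exI[where x="\<lambda>_. coeff p 0"]) (subst h, simp)
next
  case (Suc n)
  define a where "a = coeff p (Suc n) / coeff (Leg (Suc n)) (Suc n)"
  define q where "q = p - smult a (Leg (Suc n))"
  have lc: "coeff (Leg (Suc n)) (Suc n) \<noteq> 0" using deg_Leg[of "Suc n"] by simp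
  have "degree q \<le> Suc n" unfolding q_def using Suc.prems deg_Leg[of "Suc n"]
    by (intro degree_diff_le) (auto intro: order.trans[OF degree_smult_le])
  moreover have "coeff q (Suc n) = 0" unfolding q_def a_def using lc by simp
  ultimately have "degree q \<le> n" by (rule deg_drop)
  then obtain c where c: "q = (\<Sum>l\<le>n. smult (c l) (Leg l))" using Suc.IH by blast
  have "p = (\<Sum>l\<le>n. smult ((c(Suc n := a)) l) (Leg l)) + smult ((c(Suc n := a)) (Suc n)) (Leg (Suc n))"
    unfolding q_def[symmetric] by (simp add: c[symmetric] q_def)
  then have "p = (\<Sum>l\<le>Suc n. smult ((c(Suc n := a)) l) (Leg l))" by simp
  then show ?case by blast
qed

lemma coeff_zero:
  assumes h: "\<forall>t. 0 < t \<and> t < 1 \<longrightarrow> (\<Sum>l\<le>n. d l * t^l) = (0::real)" and l: "l \<le> n"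
  shows "d l = 0"
proof -
  define P where "P = (\<Sum>l\<le>n. monom (d l) l)"
  have ev: "poly P t = (\<Sum>l\<le>n. d l * t^l)" for t unfolding P_def by (simp add: poly_sum poly_monom)
  have "P = 0"
  proof (rule ccontr)
    assume "P \<noteq> 0"
    then have "finite {x. poly P x = 0}" by (rule poly_roots_finite)
    moreover have "{0<..<(1::real)} \<subseteq> {x. poly P x = 0}" using h ev by auto
    ultimately have "finite {0<..<(1::real)}" by (rule finite_subset[rotated])
    then show False using infinite_Ioo[of "0::real" 1] by simp
  qed
  then have "coeff P l = 0" by simp
  then show ?thesis unfolding P_def using coeff_sum_monom[OF l, where f=d] by simp
qed

lemma trunc: "(\<Sum>l\<le>n. if Suc l \<in> {..n} then g l else 0) = (\<Sum>l<n. g l :: real)"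
proof (cases n)
  case 0 then show ?thesis by simp
next
  case (Suc k)
  have "(\<Sum>l\<le>Suc k. if Suc l \<in> {..Suc k} then g l else 0) = (\<Sum>l\<le>k. if Suc l \<in> {..Suc k} then g l else 0)"
    by (simp add: sum.atMost_Suc)
  also have "\<dots> = (\<Sum>l\<le>k. g l)" by (rule sum.cong) auto
  finally show ?thesis using Suc by (simp add: lessThan_Suc_atMost)
qed

definition ee :: "nat \<Rightarrow> real" where "ee l = 2 * real (l+1) / ((2 * real l + 1) * (2 * real l + 3))"

lemma dsum: "(\<Sum>l\<le>n. \<Sum>m\<le>n. c l * c m * XI l m) = 2 * (\<Sum>l<n. c l * c (Suc l) * ee l)"
proof -
  have pt: "c l * c m * XI l m = (if m = Suc l then c l * c m * ee l else 0) + (if l = Suc m then c m * c l * ee m else 0)" for l m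
    unfolding XI_val ee_def by (simp add: algebra_simps)
  have A: "(\<Sum>l\<le>n. \<Sum>m\<le>n. if m = Suc l then c l * c m * ee l else 0) = (\<Sum>l<n. c l * c (Suc l) * ee l)"
  proof -
    have "(\<Sum>l\<le>n. \<Sum>m\<le>n. if m = Suc l then c l * c m * ee l else 0) = (\<Sum>l\<le>n. if Suc l \<in> {..n} then c l * c (Suc l) * ee l else 0)"
      by (rule sum.cong[OF refl]) (simp add: sum.delta')
    then show ?thesis by (simp only: trunc)
  qed
  have B: "(\<Sum>l\<le>n. \<Sum>m\<le>n. if l = Suc m then c m * c l * ee m else 0) = (\<Sum>l<n. c l * c (Suc l) * ee l)"
  proof -
    have "(\<Sum>l\<le>n. \<Sum>m\<le>n. if l = Suc m then c m * c l * ee m else 0) = (\<Sum>m\<le>n. \<Sum>l\<le>n. if l = Suc m then c m * c l * ee m else 0)"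
      by (rule sum.swap)
    also have "\<dots> = (\<Sum>m\<le>n. if Suc m \<in> {..n} then c m * c (Suc m) * ee m else 0)"
      by (rule sum.cong[OF refl]) (simp add: sum.delta')
    finally show ?thesis by (simp only: trunc)
  qed
  show ?thesis unfolding pt sum.distrib A B by simp
qed

lemma stretch:
  fixes f :: "real \<Rightarrow> real" assumes r: "r > 0"
  shows "integral {-r..r} f = r * integral {-1..1} (\<lambda>x. f (r*x))"
proof -
  have "integral ((\<lambda>x. x / r) ` {-r..r}) (\<lambda>x. f (r*x)) = (1/\<bar>r\<bar>) *\<^sub>R integral {-r..r} f"
    by (rule integral_stretch_real) (use r in simp)
  moreover have "(\<lambda>x. x / r) ` {-r..r} = {-1..1}" using r by simp
  ultimately have "integral {-1..1} (\<lambda>x. f (r*x)) = integral {-r..r} f / r" using r by simp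
  then show ?thesis using r by simp
qed

lemma Phi_sum:
  assumes t: "0 < t" "t < 1"
  shows "Phi t (\<Sum>l\<le>n. smult (c l) (Leg l)) = (\<Sum>l\<le>n. c l * Phi t (Leg l))"
proof -
  have e: "(\<lambda>x. poly (\<Sum>l\<le>n. smult (c l) (Leg l)) x / w t x) = (\<lambda>x. \<Sum>l\<le>n. c l * (L l x / w t x))"
    by (rule ext) (simp add: poly_sum sum_divide_distrib)
  show ?thesis unfolding Phi_def e
    by (subst integral_sum, simp, rule integrable_on_mult_right, rule Phi_intg[OF t], simp only: integral_mult_right)
qed

lemma alg: fixes y e P Q B1 B2 :: real assumes y: "y \<ge> 0" and e: "e > 0"
  shows "pi / e * 2 * ((e * (2 * y + 1) * P * B1) * (e * (2 * (y + 1) + 1) * Q * B2)) * (2 * (y + 1) / ((2 * y + 1) * (2 * y + 3)))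
     = 4 * pi * e * ((y + 1) * (P * Q) * B1 * B2)"
proof -
  have p: "2 * y + 1 > 0" "2 * y + 3 > 0" using y by auto
  have q: "2 * (y + 1) + 1 = 2 * y + 3" by simp
  show ?thesis unfolding q using p e by (simp add: divide_simps)
qed

theorem theorem3:
  fixes r eps0 :: real and n :: nat and b :: "nat \<Rightarrow> real"
    and phi0 :: "real \<Rightarrow> real" and sig :: "real poly"
  assumes "r > 0" and "eps0 > 0" and "n \<ge> 1"
    and "\<forall>s. -r < s \<and> s < r \<longrightarrow> - phi0 s = (\<Sum>i=1..n+1. b i * s ^ (i - 1))"
    and "b (n + 1) \<noteq> 0"
    and "degree sig \<le> n"
    and "\<forall>s. -r < s \<and> s < r \<longrightarrow>
          integral {-r..r} (\<lambda>z. r * poly sig z / sqrt (s^2 + r^2 - 2 * s * z))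
            = - 2 * eps0 * phi0 s"
  shows "ball_force r eps0 (poly sig)
           = 4 * pi * eps0 * (\<Sum>i=1..n. real i * r ^ (2 * i - 1) * b i * b (i + 1))"
proof -
  note r = assms(1) and e0 = assms(2) and n1 = assms(3) and hphi = assms(4)
    and deg = assms(6) and hint = assms(7)
  define tau where "tau = sig \<circ>\<^sub>p [:0, r:]"
  have tau_ev: "poly tau x = poly sig (r * x)" for x
    unfolding tau_def by (simp add: poly_pcompose mult.commute)
  have "degree tau \<le> n" unfolding tau_def using deg r by (simp add: degree_pcompose)
  then obtain c where c: "tau = (\<Sum>l\<le>n. smult (c l) (Leg l))" using basis by blast
  have tauL: "poly tau x = (\<Sum>l\<le>n. c l * L l x)" for x by (simp add: c poly_sum)
  have key: "(\<Sum>l\<le>n. (r * c l * 2 / (2 * real l + 1) - 2 * eps0 * b (l+1) * r^l) * t^l) = 0"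
    if t: "0 < t" "t < 1" for t
  proof -
    define s where "s = r * t"
    have rt: "r * t > 0" using t r by simp
    have rt1: "r * t < r * 1" using t r by (simp only: mult_less_cancel_left_pos)
    have s: "-r < s" "s < r" unfolding s_def using rt rt1 r by linarith+
    have pw: "r * poly sig (r * x) / sqrt (s^2 + r^2 - 2 * s * (r * x)) = poly tau x / w t x" for x
    proof -
      have "s^2 + r^2 - 2 * s * (r * x) = r^2 * (1 + t^2 - 2 * t * x)"
        unfolding s_def by (simp add: algebra_simps power2_eq_square)
      then have "sqrt (s^2 + r^2 - 2 * s * (r * x)) = r * w t x"
        unfolding w_def using r by (simp add: real_sqrt_mult)
      then show ?thesis using r by (simp add: tau_ev)
    qed
    have "- 2 * eps0 * phi0 s = integral {-r..r} (\<lambda>z. r * poly sig z / sqrt (s^2 + r^2 - 2 * s * z))"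
      using hint s by simp
    also have "\<dots> = r * Phi t tau"
      unfolding stretch[OF r] pw Phi_def ..
    also have "Phi t tau = (\<Sum>l\<le>n. c l * (2 * t^l / (2 * real l + 1)))"
      unfolding c Phi_sum[OF t] using Phi_Leg[OF t] by simp
    finally have E1: "r * (\<Sum>l\<le>n. c l * (2 * t^l / (2 * real l + 1))) = - 2 * eps0 * phi0 s" ..
    have "- phi0 s = (\<Sum>i=1..n+1. b i * s ^ (i - 1))" using hphi s by simp
    also have "\<dots> = (\<Sum>l\<le>n. b (l+1) * s^l)"
      by (simp add: sum.shift_bounds_cl_Suc_ivl atLeast0AtMost del: sum.cl_ivl_Suc)
    finally have E2: "- phi0 s = (\<Sum>l\<le>n. b (l+1) * s^l)" .
    have E3: "2 * eps0 * (\<Sum>l\<le>n. b (l+1) * s^l) = - 2 * eps0 * phi0 s" unfolding E2[symmetric] by simp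
    have "r * (\<Sum>l\<le>n. c l * (2 * t^l / (2 * real l + 1))) = 2 * eps0 * (\<Sum>l\<le>n. b (l+1) * s^l)"
      by (simp only: E1 E3)
    then have "(\<Sum>l\<le>n. r * c l * 2 / (2 * real l + 1) * t^l) - (\<Sum>l\<le>n. 2 * eps0 * b (l+1) * r^l * t^l) = 0"
      unfolding s_def by (simp add: sum_distrib_left power_mult_distrib algebra_simps)
    then show ?thesis by (simp add: sum_subtractf[symmetric] algebra_simps)
  qed
  have hc: "r * c l = eps0 * (2 * real l + 1) * r^l * b (l+1)" if l: "l \<le> n" for l
  proof -
    have "r * c l * 2 / (2 * real l + 1) - 2 * eps0 * b (l+1) * r^l = 0"
      by (rule coeff_zero[OF _ l]) (use key in blast)
    moreover have "2 * real l + 1 > 0" by simp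
    ultimately show ?thesis by (simp add: divide_simps algebra_simps)
  qed
  have F1: "integral {-r..r} (\<lambda>z. z * (poly sig z)^2) = r^2 * integral {-1..1} (\<lambda>x. x * (poly tau x)^2)"
  proof -
    have "integral {-r..r} (\<lambda>z. z * (poly sig z)^2) = r * integral {-1..1} (\<lambda>x. r * (x * (poly tau x)^2))"
      unfolding stretch[OF r] tau_ev by (simp add: mult.assoc)
    then show ?thesis by (simp add: power2_eq_square)
  qed
  have F2: "integral {-1..1} (\<lambda>x. x * (poly tau x)^2) = (\<Sum>l\<le>n. \<Sum>m\<le>n. c l * c m * XI l m)"
  proof -
    have e: "(\<lambda>x. x * (poly tau x)^2) = (\<lambda>x. \<Sum>l\<le>n. \<Sum>m\<le>n. c l * c m * (x * L l x * L m x))"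
      by (rule ext) (simp add: tauL power2_eq_square sum_product sum_distrib_left algebra_simps)
    show ?thesis unfolding e XI_def
      by (subst integral_sum, simp, rule intg, intro continuous_intros,
          rule sum.cong[OF refl], subst integral_sum, simp, rule intg, intro continuous_intros,
          simp add: integral_mult_right)
  qed
  have F3: "pi / eps0 * r^2 * (2 * (\<Sum>l<n. c l * c (Suc l) * ee l))
     = 4 * pi * eps0 * (\<Sum>l<n. real (l+1) * r ^ (2 * l + 1) * b (l+1) * b (l+2))"
  proof -
    have "pi / eps0 * r^2 * (2 * (c l * c (Suc l) * ee l)) = 4 * pi * eps0 * (real (l+1) * r ^ (2 * l + 1) * b (l+1) * b (l+2))"
      if l: "l < n" for l
    proof -
      have h1: "r * c l = eps0 * (2 * real l + 1) * r^l * b (l+1)" using hc l by simp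
      have h2: "r * c (Suc l) = eps0 * (2 * real (Suc l) + 1) * r^(Suc l) * b (Suc l + 1)" by (rule hc) (use l in simp)
      have "pi / eps0 * r^2 * (2 * (c l * c (Suc l) * ee l)) = pi / eps0 * 2 * ((r * c l) * (r * c (Suc l))) * ee l"
        by (simp add: power2_eq_square algebra_simps)
      also have "\<dots> = pi / eps0 * 2 * ((eps0 * (2 * real l + 1) * r^l * b (l+1)) * (eps0 * (2 * real (Suc l) + 1) * r^(Suc l) * b (Suc l + 1))) * ee l"
        unfolding h1 h2 ..
      also have "\<dots> = 4 * pi * eps0 * ((real l + 1) * (r^l * r^(Suc l)) * b (l+1) * b (Suc l + 1))"
      proof -
        have q: "real (Suc l) = real l + 1" "real (l+1) = real l + 1" by simp_all
        show ?thesis unfolding ee_def q by (rule alg) (use e0 in simp_all)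
      qed
      also have "\<dots> = 4 * pi * eps0 * (real (l+1) * r ^ (2 * l + 1) * b (l+1) * b (l+2))"
      proof -
        have ll: "2*l+1 = l + Suc l" by simp
        have rr: "r^l * r^(Suc l) = r^(2*l+1)" by (simp only: ll power_add)
        show ?thesis unfolding rr by simp
      qed
      finally show ?thesis .
    qed
    then show ?thesis by (simp add: sum_distrib_left)
  qed
  have F4: "(\<Sum>l<n. real (l+1) * r ^ (2 * l + 1) * b (l+1) * b (l+2))
      = (\<Sum>i=1..n. real i * r ^ (2 * i - 1) * b i * b (i + 1))"
  proof -
    obtain k where k: "n = Suc k" using n1 by (cases n) auto
    show ?thesis unfolding k
      by (simp add: sum.shift_bounds_cl_Suc_ivl atLeast0AtMost lessThan_Suc_atMost del: sum.cl_ivl_Suc)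
  qed
  show ?thesis unfolding ball_force_def F1 F2 dsum
    using F3 F4 by (simp add: mult.assoc)
qed


end
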